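(* Fix $\delta>0$ and an integer $d\ge0$. Let $K(s)$, $s\in B^d(1)$, be a continuous family of links transverse to $\xi_0$ in $\mathbb{R}^3$ such that $K(s)\subset B(\delta)$ for all $s\in\partial B^d(1)$. Then there is a homotopy $K(s,t)$, $0\le t\le1$, through transverse links, with $K(s,t)=K(s)$ for $s\in\partial B^d(1)$, $K(s,0)=K(s)$ and $K(s,1)\subset B(\delta)$ for every $s\in B^d(1)$. In particular, the space of transverse links in $\mathbb{R}^3$ is weakly homotopy equivalent to the space of transverse links contained in $B(\delta)$.
   Context: $\xi_0=\ker(dx_3-x_2\,dx_1+x_1\,dx_2)$ on $\mathbb{R}^3$; a link is transverse if it is everywhere transverse to $\xi_0$. $B^d(r)$ denotes the closed $d$-dimensional ball of radius $r$ about the origin and $B(r)=B^3(r)\subset\mathbb{R}^3$. *)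

theory Defs
  imports "HOL-Analysis.Analysis"
begin

text \<open>Parameter disc B^d(1) and its boundary sphere, for arbitrary d \<ge> 0,
  realised inside nat \<Rightarrow> real (functions vanishing from index d on);
  the product topology restricted to these sets is the Euclidean one.\<close>

definition pdisc :: "nat \<Rightarrow> (nat \<Rightarrow> real) set" where
  "pdisc d = {s. (\<forall>i\<ge>d. s i = 0) \<and> (\<Sum>i<d. (s i)\<^sup>2) \<le> 1}"

definition psphere :: "nat \<Rightarrow> (nat \<Rightarrow> real) set" where
  "psphere d = {s. (\<forall>i\<ge>d. s i = 0) \<and> (\<Sum>i<d. (s i)\<^sup>2) = 1}"

definition vd :: "(real \<Rightarrow> real^3) \<Rightarrow> real \<Rightarrow> real^3" where
  "vd g = (\<lambda>t. vector_derivative g (at t))"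

text \<open>The standard contact form alpha = dx3 - x2 dx1 + x1 dx2 evaluated at x on v.\<close>

definition alpha0 :: "real^3 \<Rightarrow> real^3 \<Rightarrow> real" where
  "alpha0 x v = v$3 - x$2 * v$1 + x$1 * v$2"

definition is_link :: "nat \<Rightarrow> (nat \<Rightarrow> real \<Rightarrow> real^3) \<Rightarrow> bool" where
  "is_link m K \<longleftrightarrow>
     (\<forall>i<m. \<forall>t. K i (t + 1) = K i t) \<and>
     (\<forall>i<m. \<forall>k t. ((vd ^^ k) (K i) has_vector_derivative (vd ^^ Suc k) (K i) t) (at t)) \<and>
     (\<forall>i<m. \<forall>t. vd (K i) t \<noteq> 0) \<and>
     inj_on (\<lambda>(i, t). K i t) ({..<m} \<times> {0..<1})"

definition transverse_link :: "nat \<Rightarrow> (nat \<Rightarrow> real \<Rightarrow> real^3) \<Rightarrow> bool" where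
  "transverse_link m K \<longleftrightarrow> is_link m K \<and> (\<forall>i<m. \<forall>t. alpha0 (K i t) (vd (K i) t) \<noteq> 0)"

definition link_in_ball :: "nat \<Rightarrow> real \<Rightarrow> (nat \<Rightarrow> real \<Rightarrow> real^3) \<Rightarrow> bool" where
  "link_in_ball m r K \<longleftrightarrow> (\<forall>i<m. \<forall>t. K i t \<in> cball 0 r)"

text \<open>Continuity of a family of links over a parameter set P in the C^\<infinity> topology:
  every t-derivative of every component is jointly continuous in (parameter, t).\<close>

definition cont_family :: "'p::topological_space set \<Rightarrow> nat \<Rightarrow> ('p \<Rightarrow> nat \<Rightarrow> real \<Rightarrow> real^3) \<Rightarrow> bool" where
  "cont_family P m K \<longleftrightarrow>
     (\<forall>i<m. \<forall>k. continuous_on (P \<times> UNIV) (\<lambda>(p, t). (vd ^^ k) (K p i) t))"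

end

theory Submission
  imports Defs
begin

definition scl :: "real \<Rightarrow> real^3 \<Rightarrow> real^3" where
  "scl l x = (\<chi> j. (if j = 3 then l^2 else l) * x$j)"

lemma scl_comp: "scl l x $ 1 = l * x$1" "scl l x $ 2 = l * x$2" "scl l x $ 3 = l^2 * x$3"
  by (simp_all add: scl_def)

lemma scl_1[simp]: "scl 1 x = x"
  by (simp add: scl_def vec_eq_iff)

lemma scl_linear: "bounded_linear (scl l)"
proof -
  have "linear (scl l)"
    by (rule linearI) (simp_all add: scl_def vec_eq_iff algebra_simps)
  then show ?thesis by (simp add: linear_conv_bounded_linear)
qed

lemma alpha0_scl: "alpha0 (scl l x) (scl l v) = l^2 * alpha0 x v"
  by (simp add: alpha0_def scl_comp algebra_simps power2_eq_square)

lemma scl_inj: "l \<noteq> 0 \<Longrightarrow> scl l x = scl l y \<Longrightarrow> x = y"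
  by (auto simp: scl_def vec_eq_iff split: if_splits)

lemma scl_norm: assumes "0 \<le> l" "l \<le> 1" shows "norm (scl l x) \<le> l * norm x"
proof -
  have "norm (scl l x) \<le> norm (l *\<^sub>R x)"
  proof (rule norm_le_componentwise_cart)
    fix j
    have "l^2 \<le> l" using assms by (simp add: power2_eq_square mult_left_le)
    moreover have "0 \<le> l^2" by simp
    ultimately show "norm (scl l x $ j) \<le> norm ((l *\<^sub>R x) $ j)"
      using assms by (auto simp: scl_def abs_mult intro: mult_right_mono)
  qed
  then show ?thesis using assms by simp
qed

lemma continuous_on_scl[continuous_intros]:
  "continuous_on S f \<Longrightarrow> continuous_on S g \<Longrightarrow> continuous_on S (\<lambda>x. scl (f x) (g x))"
  unfolding scl_def
  apply (intro continuous_on_vec_lambda continuous_on_mult)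
  subgoal for j by (cases "j = 3") (auto intro!: continuous_intros)
  by (auto intro!: continuous_intros)

lemma vd_scl:
  assumes "\<forall>k t. ((vd ^^ k) g has_vector_derivative (vd ^^ Suc k) g t) (at t)"
  shows "(vd ^^ k) (\<lambda>\<tau>. scl l (g \<tau>)) = (\<lambda>\<tau>. scl l ((vd ^^ k) g \<tau>))"
proof (induction k)
  case 0 then show ?case by simp
next
  case (Suc k)
  have "((\<lambda>\<tau>. scl l ((vd ^^ k) g \<tau>)) has_vector_derivative scl l ((vd ^^ Suc k) g t)) (at t)" for t
    using bounded_linear.has_vector_derivative[OF scl_linear assms[rule_format, of k t]] .
  then have "vd (\<lambda>\<tau>. scl l ((vd ^^ k) g \<tau>)) = (\<lambda>\<tau>. scl l ((vd ^^ Suc k) g \<tau>))"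
    by (simp add: vd_def[of "\<lambda>\<tau>. scl l ((vd ^^ k) g \<tau>)"] vector_derivative_at fun_eq_iff)
  then show ?case using Suc.IH by simp
qed

lemma periodic_int:
  assumes "\<forall>t. g (t + 1) = g t" shows "g (t + real_of_int z) = g t"
proof -
  have n: "g (t + real n) = g t" for t n
  proof (induction n arbitrary: t)
    case (Suc n)
    have "g (t + real (Suc n)) = g ((t + real n) + 1)" by (simp add: algebra_simps)
    then show ?case using assms Suc by simp
  qed simp
  show ?thesis
  proof (cases "z \<ge> 0")
    case True then obtain n where "z = int n" by (metis nonneg_eq_int)
    then show ?thesis using n by simp
  next
    case False then have "z = - int (nat (-z))" by simp
    then show ?thesis using n[of "t - real (nat (-z))" "nat (-z)"] by (metis add_diff_cancel of_int_minus of_int_of_nat_eq diff_conv_add_uminus)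
  qed
qed

lemma cont_coord: "continuous_on S f \<Longrightarrow> continuous_on S (\<lambda>x. f x i)"
  by (rule continuous_on_product_then_coordinatewise)

lemma pdisc_compact: "compact (pdisc d)"
proof -
  define Q :: "(nat \<Rightarrow> real) set" where "Q = PiE UNIV (\<lambda>i. {-1..1})"
  have "compactin (product_topology (\<lambda>i. euclidean) UNIV) Q"
    unfolding Q_def by (subst compactin_PiE) auto
  then have cQ: "compact Q" by (simp add: euclidean_product_topology)
  have cl: "closed (pdisc d)"
  proof -
    have e: "pdisc d = (\<Inter>i\<in>{d..}. {s. s i = 0}) \<inter> {s. (\<Sum>i<d. (s i)\<^sup>2) \<le> 1}"
      by (auto simp: pdisc_def)
    have c1: "closed {s::nat\<Rightarrow>real. s i = 0}" for i
      by (rule closed_Collect_eq) simp_all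
    have c2: "closed {s::nat\<Rightarrow>real. (\<Sum>i<d. (s i)\<^sup>2) \<le> 1}"
      by (rule closed_Collect_le) (intro continuous_on_sum continuous_on_power continuous_on_product_coordinates continuous_on_const)+
    show ?thesis unfolding e by (intro closed_Int closed_INT ballI c1 c2)
  qed
  have "pdisc d \<subseteq> Q"
  proof
    fix s assume s: "s \<in> pdisc d"
    have "\<bar>s i\<bar> \<le> 1" for i
    proof (cases "i < d")
      case True
      have "(s i)\<^sup>2 \<le> (\<Sum>i<d. (s i)\<^sup>2)" using True by (intro member_le_sum) auto
      also have "\<dots> \<le> 1" using s by (simp add: pdisc_def)
      finally show ?thesis by (simp add: abs_square_le_1)
    next
      case False then show ?thesis using s by (simp add: pdisc_def)
    qed
    then show "s \<in> Q" by (auto simp: Q_def abs_le_iff)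
  qed
  then have "pdisc d = Q \<inter> pdisc d" by blast
  then show ?thesis using compact_Int_closed[OF cQ cl] by simp
qed

lemma bound_family:
  assumes "cont_family (pdisc d) m K" "\<forall>s\<in>pdisc d. transverse_link m (K s)"
  obtains M where "M \<ge> 0" "\<forall>s\<in>pdisc d. \<forall>i<m. \<forall>\<tau>. norm (K s i \<tau>) \<le> M"
proof -
  have "bounded ((\<lambda>(p, t). K p i t) ` (pdisc d \<times> {0..1}))" if i: "i < m" for i
  proof -
    have "continuous_on (pdisc d \<times> UNIV) (\<lambda>(p, t). (vd ^^ 0) (K p i) t)"
      using assms(1) i unfolding cont_family_def by blast
    then have "continuous_on (pdisc d \<times> UNIV) (\<lambda>(p, t). K p i t)" by simp
    then have "continuous_on (pdisc d \<times> {0..1}) (\<lambda>(p, t). K p i t)"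
      by (rule continuous_on_subset) auto
    then show ?thesis
      by (intro compact_imp_bounded compact_continuous_image compact_Times pdisc_compact) auto
  qed
  then have "bounded (\<Union>i<m. (\<lambda>(p, t). K p i t) ` (pdisc d \<times> {0..1}))" by (intro bounded_UN) auto
  then obtain B where B: "B > 0" "\<And>x. x \<in> (\<Union>i<m. (\<lambda>(p, t). K p i t) ` (pdisc d \<times> {0..1})) \<Longrightarrow> norm x \<le> B"
    unfolding bounded_pos by blast
  show ?thesis
  proof (rule that[of B])
    show "0 \<le> B" using B by simp
    show "\<forall>s\<in>pdisc d. \<forall>i<m. \<forall>\<tau>. norm (K s i \<tau>) \<le> B"
    proof (intro ballI allI impI)
      fix s i \<tau> assume s: "s \<in> pdisc d" and i: "i < m"
      have per: "\<forall>t. K s i (t + 1) = K s i t" using assms(2) s i by (simp add: transverse_link_def is_link_def)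
      have "K s i \<tau> = K s i (frac \<tau> + real_of_int \<lfloor>\<tau>\<rfloor>)" by (simp add: frac_def)
      also have "\<dots> = K s i (frac \<tau>)" by (rule periodic_int[OF per])
      finally have eq: "K s i \<tau> = K s i (frac \<tau>)" .
      have "frac \<tau> \<in> {0..1}" using frac_ge_0 frac_lt_1[of \<tau>] by simp
      then have "K s i (frac \<tau>) \<in> (\<Union>i<m. (\<lambda>(p, t). K p i t) ` (pdisc d \<times> {0..1}))"
        using s i by (intro UN_I[of i]) (auto intro!: image_eqI[of _ _ "(s, frac \<tau>)"])
      then show "norm (K s i \<tau>) \<le> B" using B eq by simp
    qed
  qed
qed

lemma transverse_scl:
  assumes "transverse_link m L" "l \<noteq> 0"
  shows "transverse_link m (\<lambda>i \<tau>. scl l (L i \<tau>))"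
proof -
  have sm: "\<forall>k t. ((vd ^^ k) (L i) has_vector_derivative (vd ^^ Suc k) (L i) t) (at t)" if "i < m" for i
    using assms(1) that by (simp add: transverse_link_def is_link_def)
  have vd1: "vd (\<lambda>\<tau>. scl l (L i \<tau>)) = (\<lambda>\<tau>. scl l (vd (L i) \<tau>))" if "i < m" for i
    using vd_scl[OF sm[OF that], of 1 l] by simp
  have z: "scl l 0 = 0" by (simp add: scl_def vec_eq_iff)
  show ?thesis
    unfolding transverse_link_def is_link_def
  proof (intro conjI allI impI)
    fix i t assume i: "i < m"
    show "scl l (L i (t + 1)) = scl l (L i t)" using assms(1) i by (simp add: transverse_link_def is_link_def)
  next
    fix i k t assume i: "i < m"
    show "((vd ^^ k) (\<lambda>\<tau>. scl l (L i \<tau>)) has_vector_derivative (vd ^^ Suc k) (\<lambda>\<tau>. scl l (L i \<tau>)) t) (at t)"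
      unfolding vd_scl[OF sm[OF i]]
      by (rule bounded_linear.has_vector_derivative[OF scl_linear]) (use sm[OF i] in blast)
  next
    fix i t assume i: "i < m"
    have "vd (L i) t \<noteq> 0" using assms(1) i by (simp add: transverse_link_def is_link_def)
    then show "vd (\<lambda>\<tau>. scl l (L i \<tau>)) t \<noteq> 0" using vd1[OF i] scl_inj[OF assms(2), of "vd (L i) t" 0] z by auto
  next
    fix i t assume i: "i < m"
    have "alpha0 (L i t) (vd (L i) t) \<noteq> 0" using assms(1) i by (simp add: transverse_link_def)
    then show "alpha0 (scl l (L i t)) (vd (\<lambda>\<tau>. scl l (L i \<tau>)) t) \<noteq> 0"
      using vd1[OF i] assms(2) by (simp add: alpha0_scl)
  next
    have "inj_on (\<lambda>(i, t). L i t) ({..<m} \<times> {0..<1})" using assms(1) by (simp add: transverse_link_def is_link_def)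
    moreover have "inj_on (scl l) X" for X using scl_inj[OF assms(2)] by (auto simp: inj_on_def)
    moreover have e: "(\<lambda>(i, t). scl l (L i t)) = scl l \<circ> (\<lambda>(i, t). L i t)" by (auto simp: fun_eq_iff)
    ultimately show "inj_on (\<lambda>(i, t). scl l (L i t)) ({..<m} \<times> {0..<1})"
      unfolding e by (intro comp_inj_on) auto
  qed
qed


theorem lemma3p6:
  fixes \<delta> :: real and d m :: nat
    and K :: "(nat \<Rightarrow> real) \<Rightarrow> nat \<Rightarrow> real \<Rightarrow> real^3"
  assumes "\<delta> > 0"
    and "cont_family (pdisc d) m K"
    and "\<forall>s\<in>pdisc d. transverse_link m (K s)"
    and "\<forall>s\<in>psphere d. link_in_ball m \<delta> (K s)"
  shows "\<exists>H :: (nat \<Rightarrow> real) \<times> real \<Rightarrow> nat \<Rightarrow> real \<Rightarrow> real^3.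
           cont_family (pdisc d \<times> {0..1}) m H \<and>
           (\<forall>s\<in>pdisc d. \<forall>t\<in>{0..1}. transverse_link m (H (s, t))) \<and>
           (\<forall>s\<in>psphere d. \<forall>t\<in>{0..1}. \<forall>i<m. H (s, t) i = K s i) \<and>
           (\<forall>s\<in>pdisc d. \<forall>i<m. H (s, 0) i = K s i) \<and>
           (\<forall>s\<in>pdisc d. link_in_ball m \<delta> (H (s, 1)))"
proof -
  obtain M where M0: "M \<ge> 0" and MB: "\<forall>s\<in>pdisc d. \<forall>i<m. \<forall>\<tau>. norm (K s i \<tau>) \<le> M"
    using bound_family[OF assms(2,3)] by blast
  define c where "c = min 1 (\<delta> / (M + 1))"
  have c0: "c > 0" using assms(1) M0 by (simp add: c_def)
  have c1: "c \<le> 1" by (simp add: c_def)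
  have cM: "c * M \<le> \<delta>"
  proof -
    have "c * M \<le> \<delta> / (M + 1) * M" using M0 by (intro mult_right_mono) (auto simp: c_def)
    also have "\<dots> = \<delta> * (M / (M + 1))" by simp
    also have "\<dots> \<le> \<delta> * 1" using M0 assms(1) by (intro mult_left_mono) auto
    finally show ?thesis by simp
  qed
  define N where "N = (\<lambda>s::nat\<Rightarrow>real. sqrt (\<Sum>i<d. (s i)\<^sup>2))"
  define P where "P = pdisc d \<times> {0..1::real}"
  define f where "f = (\<lambda>p::(nat\<Rightarrow>real)\<times>real. min (1 / (1 - snd p / 2)) (1 / max (N (fst p)) (1/2)))"
  define \<rho> where "\<rho> = (\<lambda>p i. f p * fst p i)"
  define h where "h = (\<lambda>s. min 1 (max 0 (2 - 2 * N s)))"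
  define lam where "lam = (\<lambda>p. 1 - snd p * (1 - c) * h (fst p))"
  define H where "H = (\<lambda>p i \<tau>. scl (lam p) (K (\<rho> p) i \<tau>))"
  have Nnn: "N s \<ge> 0" for s unfolding N_def by (intro real_sqrt_ge_zero sum_nonneg) auto
  have Nsq: "(N s)\<^sup>2 = (\<Sum>i<d. (s i)\<^sup>2)" for s unfolding N_def by (intro real_sqrt_pow2 sum_nonneg) auto
  have Nle: "N s \<le> 1" if "s \<in> pdisc d" for s using that by (simp add: N_def pdisc_def)
  have sph: "s \<in> pdisc d" "N s = 1" if "s \<in> psphere d" for s
    using that by (auto simp: N_def pdisc_def psphere_def)
  have fpos: "f p \<ge> 0" if "p \<in> P" for p using that Nnn by (auto simp: f_def P_def)
  have fN: "f p * N (fst p) \<le> 1" if "p \<in> P" for p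
  proof (cases "N (fst p) \<ge> 1/2")
    case True
    then have "f p \<le> 1 / N (fst p)" by (simp add: f_def)
    then have "f p * N (fst p) \<le> 1 / N (fst p) * N (fst p)" using Nnn by (intro mult_right_mono) auto
    then show ?thesis using True by simp
  next
    case False
    have "snd p \<le> 1" "snd p \<ge> 0" using that by (auto simp: P_def)
    then have "1 / (1 - snd p / 2) \<le> 2" by (simp add: field_simps)
    then have "f p \<le> 2" unfolding f_def by (rule min.coboundedI1)
    then have "f p * N (fst p) \<le> 2 * (1/2)" using False Nnn by (intro mult_mono) auto
    then show ?thesis by simp
  qed
  have rho_in: "\<rho> p \<in> pdisc d" if p: "p \<in> P" for p
  proof -
    have s: "fst p \<in> pdisc d" using p by (auto simp: P_def)
    have "(\<Sum>i<d. (\<rho> p i)\<^sup>2) = (f p)\<^sup>2 * (\<Sum>i<d. (fst p i)\<^sup>2)"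
      by (simp add: \<rho>_def power_mult_distrib sum_distrib_left)
    also have "\<dots> = (f p * N (fst p))\<^sup>2" by (simp add: power_mult_distrib Nsq)
    also have "\<dots> \<le> 1" using fN[OF p] fpos[OF p] Nnn by (simp add: abs_square_le_1)
    finally show ?thesis using s by (simp add: pdisc_def \<rho>_def)
  qed
  have hb: "0 \<le> h s" "h s \<le> 1" for s by (auto simp: h_def)
  have lam_b: "c \<le> lam p" "lam p \<le> 1" if "p \<in> P" for p
  proof -
    have t: "0 \<le> snd p" "snd p \<le> 1" using that by (auto simp: P_def)
    have "snd p * h (fst p) \<le> 1" using t hb by (intro mult_le_one) auto
    then have "(1 - c) * (snd p * h (fst p)) \<le> (1 - c) * 1" using c1 by (intro mult_left_mono) auto
    moreover have "0 \<le> (1 - c) * (snd p * h (fst p))" using c1 t hb by simp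
    ultimately show "c \<le> lam p" "lam p \<le> 1" by (auto simp: lam_def algebra_simps)
  qed
  have lam_nz: "lam p \<noteq> 0" if "p \<in> P" for p using lam_b[OF that] c0 by simp
  have contN: "continuous_on UNIV N" unfolding N_def
    by (intro continuous_on_sum continuous_on_power continuous_on_product_coordinates continuous_intros)
  have contNf: "continuous_on P (\<lambda>p. N (fst p))"
    by (rule continuous_on_compose2[OF contN continuous_on_fst]) auto
  have contf: "continuous_on P f"
  proof -
    have a: "continuous_on P (\<lambda>p::(nat\<Rightarrow>real)\<times>real. 1 / (1 - snd p / 2))"
      unfolding P_def by (intro continuous_intros) auto
    have b: "continuous_on P (\<lambda>p. 1 / max (N (fst p)) (1/2::real))"
      by (intro continuous_on_divide continuous_on_max continuous_on_const contNf) auto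
    show ?thesis unfolding f_def by (rule continuous_on_min[OF a b])
  qed
  have contrho: "continuous_on P \<rho>"
    unfolding \<rho>_def
  proof (rule continuous_on_coordinatewise_then_product)
    fix i
    have "continuous_on P (\<lambda>p::(nat\<Rightarrow>real)\<times>real. fst p i)"
      using cont_coord[OF continuous_on_fst[OF continuous_on_id], of P i] by simp
    then show "continuous_on P (\<lambda>p. f p * fst p i)" by (rule continuous_on_mult[OF contf])
  qed
  have contlam: "continuous_on P lam"
    unfolding lam_def h_def
    by (intro continuous_on_min continuous_on_mult continuous_on_const continuous_on_diff
        continuous_on_snd continuous_on_max contNf continuous_on_id)
  have cf: "cont_family P m H"
    unfolding cont_family_def
  proof (intro allI impI)
    fix i k assume i: "i < m"
    have G: "continuous_on (pdisc d \<times> UNIV) (\<lambda>(q, \<tau>). (vd ^^ k) (K q i) \<tau>)"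
      using assms(2) i unfolding cont_family_def by blast
    have G2: "continuous_on (P \<times> UNIV) (\<lambda>x. (\<lambda>(q, \<tau>). (vd ^^ k) (K q i) \<tau>) (\<rho> (fst x), snd x))"
    proof (rule continuous_on_compose2[OF G])
      show "continuous_on (P \<times> UNIV) (\<lambda>x. (\<rho> (fst x), snd x))"
        by (intro continuous_on_Pair continuous_on_snd continuous_on_compose2[OF contrho continuous_on_fst]) auto
      show "(\<lambda>x. (\<rho> (fst x), snd x)) ` (P \<times> UNIV) \<subseteq> pdisc d \<times> UNIV" using rho_in by auto
    qed
    have L: "continuous_on (P \<times> UNIV) (\<lambda>x. lam (fst x))"
      by (rule continuous_on_compose2[OF contlam continuous_on_fst]) auto
    show "continuous_on (P \<times> UNIV) (\<lambda>(p, t). (vd ^^ k) (H p i) t)"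
    proof (rule continuous_on_eq[OF continuous_on_scl[OF L G2]])
      fix x :: "((nat\<Rightarrow>real)\<times>real)\<times>real" assume x: "x \<in> P \<times> UNIV"
      obtain p t where pt: "x = (p, t)" by (cases x)
      have p: "p \<in> P" using x pt by auto
      have sm: "\<forall>k t. ((vd ^^ k) (K (\<rho> p) i) has_vector_derivative (vd ^^ Suc k) (K (\<rho> p) i) t) (at t)"
        using assms(3) rho_in[OF p] i by (simp add: transverse_link_def is_link_def)
      show "scl (lam (fst x)) ((\<lambda>(q, \<tau>). (vd ^^ k) (K q i) \<tau>) (\<rho> (fst x), snd x)) = (\<lambda>(p, t). (vd ^^ k) (H p i) t) x"
        unfolding pt H_def using vd_scl[OF sm, of k "lam p"] by simp
    qed
  qed
  show ?thesis
  proof (intro exI[of _ H] conjI)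
    show "cont_family (pdisc d \<times> {0..1}) m H" using cf by (simp add: P_def)
    show "\<forall>s\<in>pdisc d. \<forall>t\<in>{0..1}. transverse_link m (H (s, t))"
    proof (intro ballI)
      fix s t assume "s \<in> pdisc d" "t \<in> {0..1::real}"
      then have p: "(s, t) \<in> P" by (simp add: P_def)
      show "transverse_link m (H (s, t))"
        unfolding H_def using transverse_scl[OF assms(3)[rule_format, OF rho_in[OF p]] lam_nz[OF p]] .
    qed
    show "\<forall>s\<in>psphere d. \<forall>t\<in>{0..1}. \<forall>i<m. H (s, t) i = K s i"
    proof (intro ballI allI impI)
      fix s t i assume s: "s \<in> psphere d" and t: "t \<in> {0..1::real}"
      have "1 \<le> 1 / (1 - t / 2)" using t by (simp add: field_simps)
      then have "f (s, t) = 1" using sph[OF s] by (simp add: f_def)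
      then have r: "\<rho> (s, t) = s" by (simp add: \<rho>_def)
      have "lam (s, t) = 1" using sph[OF s] by (simp add: lam_def h_def)
      then show "H (s, t) i = K s i" using r by (simp add: H_def)
    qed
    show "\<forall>s\<in>pdisc d. \<forall>i<m. H (s, 0) i = K s i"
    proof (intro ballI allI impI)
      fix s i assume s: "s \<in> pdisc d"
      have "max (N s) (1/2) \<le> 1" using Nle[OF s] by simp
      then have "1 \<le> 1 / max (N s) (1/2)" by (simp add: field_simps)
      then have "f (s, 0) = 1" by (simp add: f_def)
      then have r: "\<rho> (s, 0) = s" by (simp add: \<rho>_def)
      have "lam (s, 0) = 1" by (simp add: lam_def)
      then show "H (s, 0) i = K s i" using r by (simp add: H_def)
    qed
    show "\<forall>s\<in>pdisc d. link_in_ball m \<delta> (H (s, 1))"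
    proof (intro ballI)
      fix s assume s: "s \<in> pdisc d"
      have p: "(s, 1) \<in> P" using s by (simp add: P_def)
      show "link_in_ball m \<delta> (H (s, 1))"
        unfolding link_in_ball_def
      proof (intro allI impI)
        fix i \<tau> assume i: "i < m"
        define x where "x = K (\<rho> (s, 1)) i \<tau>"
        have Hx: "H (s, 1) i \<tau> = scl (lam (s, 1)) x" by (simp add: H_def x_def)
        have l0: "0 \<le> lam (s, 1)" "lam (s, 1) \<le> 1" using lam_b[OF p] c0 by auto
        show "H (s, 1) i \<tau> \<in> cball 0 \<delta>"
        proof (cases "N s \<le> 1/2")
          case True
          then have "h s = 1" by (simp add: h_def)
          then have "lam (s, 1) = c" by (simp add: lam_def)
          moreover have "norm x \<le> M" using MB rho_in[OF p] i by (simp add: x_def)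
          ultimately have "norm (scl (lam (s, 1)) x) \<le> c * M"
            using scl_norm[OF l0, of x] c0 by (metis mult_left_mono order.trans less_imp_le)
          then show ?thesis using Hx cM by simp
        next
          case False
          then have Npos: "N s > 0" by simp
          have "1 / N s \<le> 2" using False by (simp add: field_simps)
          then have "f (s, 1) = 1 / N s" using False by (simp add: f_def)
          then have r: "\<rho> (s, 1) = (\<lambda>i. s i / N s)" by (simp add: \<rho>_def fun_eq_iff)
          have "(\<Sum>i<d. (s i / N s)\<^sup>2) = (\<Sum>i<d. (s i)\<^sup>2) / (N s)\<^sup>2"
            by (simp add: power_divide sum_divide_distrib)
          also have "\<dots> = 1" using Npos by (simp add: Nsq[symmetric])
          finally have "\<rho> (s, 1) \<in> psphere d" using s r by (simp add: psphere_def pdisc_def)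
          then have "norm x \<le> \<delta>" using assms(4) i by (simp add: x_def link_in_ball_def)
          moreover have "norm (scl (lam (s, 1)) x) \<le> lam (s, 1) * norm x" by (rule scl_norm[OF l0])
          moreover have "lam (s, 1) * norm x \<le> norm x" using l0 by (simp add: mult_left_le_one_le)
          ultimately show ?thesis using Hx by simp
        qed
      qed
    qed
  qed
qed

end
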